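(* Let $N\ge 2$, $x_0<x_1<\dots<x_N$, $h_i=x_i-x_{i-1}$, and let $f_1,\dots,f_N\in\mathbb{R}$ be a histogram. Let $I=[x_0,x_N]$, $I_i=[x_{i-1},x_i)$ for $i<N$, $I_N=[x_{N-1},x_N]$, and for $i=1,\dots,N$ let $L_i(x)=a_ix+b_i$ with $a_i=\frac{x_i-x_{i-1}}{x_N-x_0}$, $b_i=\frac{x_Nx_{i-1}-x_0x_i}{x_N-x_0}$, let $\alpha_i$ be arbitrary with $|\alpha_i|<1$, and let $q_i:I\to\mathbb{R}$ be Lipschitz continuous. Let $f$ be the unique bounded function on $I$ with $f(x)=\alpha_if(L_i^{-1}(x))+q_i(L_i^{-1}(x))$ for $x\in I_i$, $i=1,\dots,N$. Suppose there are real numbers $y_0,y_N$ such that $$\int_Iq_i(x)\,dx=\frac{h_if_i-\alpha_ia_i\sum_{j=1}^Nh_jf_j}{a_i}\quad(i=1,\dots,N),$$ $$q_1(x_0)=y_0(1-\alpha_1),\quad q_N(x_N)=y_N(1-\alpha_N),\quad \alpha_{i+1}y_0+q_{i+1}(x_0)=\alpha_iy_N+q_i(x_N)\ (i=1,\dots,N-1).$$ Then $f$ is continuous on $I$ and $\int_{x_{i-1}}^{x_i}f(x)\,dx=h_if_i$ for all $i=1,\dots,N$. *)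

theory Defs
  imports "HOL-Analysis.Analysis"
begin

text \<open>Nodes x 0 < ... < x N. Affine maps L_i(t) = a_i t + b_i mapping [x_0,x_N] onto [x_(i-1),x_i].\<close>

definition fif_a :: "(nat \<Rightarrow> real) \<Rightarrow> nat \<Rightarrow> nat \<Rightarrow> real" where
  "fif_a x N i = (x i - x (i - 1)) / (x N - x 0)"

definition fif_b :: "(nat \<Rightarrow> real) \<Rightarrow> nat \<Rightarrow> nat \<Rightarrow> real" where
  "fif_b x N i = (x N * x (i - 1) - x 0 * x i) / (x N - x 0)"

definition fif_Linv :: "(nat \<Rightarrow> real) \<Rightarrow> nat \<Rightarrow> nat \<Rightarrow> real \<Rightarrow> real" where
  "fif_Linv x N i t = (t - fif_b x N i) / fif_a x N i"

definition fif_I :: "(nat \<Rightarrow> real) \<Rightarrow> nat \<Rightarrow> nat \<Rightarrow> real set" where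
  "fif_I x N i = (if i < N then {x (i - 1)..<x i} else {x (N - 1)..x N})"

end

theory Submission
  imports Defs
begin

definition Top :: "nat \<Rightarrow> (nat\<Rightarrow>real) \<Rightarrow> (nat\<Rightarrow>real) \<Rightarrow> (nat \<Rightarrow> real \<Rightarrow> real) \<Rightarrow> (real\<Rightarrow>real) \<Rightarrow> real \<Rightarrow> real" where
 "Top N x \<alpha> q g t = (let i = (SOME i. i \<in> {1..N} \<and> t \<in> fif_I x N i) in \<alpha> i * g (fif_Linv x N i t) + q i (fif_Linv x N i t))"

lemma aff: fixes uu vv pp rr tt :: real assumes "uu<vv" "pp<rr"
 shows "(tt - (rr*uu - pp * vv)/(rr-pp)) / ((vv-uu)/(rr-pp)) = pp + (tt-uu)*(rr-pp)/(vv-uu)"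
proof -
  have a: "vv - uu \<noteq> 0" "rr - pp \<noteq> 0" using assms by auto
  have "(tt - (rr*uu - pp * vv)/(rr-pp)) / ((vv-uu)/(rr-pp)) = (tt - (rr*uu - pp * vv)/(rr-pp)) * (rr-pp) / (vv-uu)"
    by simp
  also have "(tt - (rr*uu - pp * vv)/(rr-pp)) * (rr-pp) = tt*(rr-pp) - (rr*uu - pp * vv)"
  proof -
    have c: "(rr*uu - pp * vv)/(rr-pp) * (rr-pp) = rr*uu - pp * vv" using a by simp
    show ?thesis by (subst left_diff_distrib) (simp only: c)
  qed
  also have "(tt*(rr-pp) - (rr*uu - pp * vv)) / (vv-uu) = (pp*(vv-uu) + (tt-uu)*(rr-pp)) / (vv-uu)"
    by (simp add: algebra_simps)
  also have "\<dots> = pp + (tt-uu)*(rr-pp)/(vv-uu)" using a by (simp add: add_divide_distrib)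
  finally show ?thesis .
qed

locale fifl =
  fixes N :: nat and x :: "nat \<Rightarrow> real"
  assumes N2: "N \<ge> 2"
    and xinc: "\<And>i. i < N \<Longrightarrow> x i < x (Suc i)"
begin

lemma xlt: "i < j \<Longrightarrow> j \<le> N \<Longrightarrow> x i < x j"
proof (induction j)
  case 0 then show ?case by simp
next
  case (Suc j)
  then show ?case using xinc[of j]
    by (metis Suc_leD Suc_le_lessD dual_order.strict_trans less_antisym)
qed

lemma xle: "i \<le> j \<Longrightarrow> j \<le> N \<Longrightarrow> x i \<le> x j"
  using xlt[of i j] by (cases "i = j") auto

lemma x0N: "x 0 < x N" using xlt N2 by simp

lemma apos: "i \<in> {1..N} \<Longrightarrow> fif_a x N i > 0"
  unfolding fif_a_def using xlt[of "i-1" i] x0N by auto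

lemma Linv_eq: "i \<in> {1..N} \<Longrightarrow>
   fif_Linv x N i t = x 0 + (t - x (i-1)) * (x N - x 0) / (x i - x (i-1))"
proof -
  assume i: "i \<in> {1..N}"
  have h: "x i - x (i-1) > 0" using xlt[of "i-1" i] i by auto
  have D: "x N - x 0 > 0" using x0N by simp
  show ?thesis unfolding fif_Linv_def fif_a_def fif_b_def
    using aff[of "x (i-1)" "x i" "x 0" "x N" t] xlt[of "i-1" i] i x0N by auto
qed

lemma Linv_left: "i \<in> {1..N} \<Longrightarrow> fif_Linv x N i (x (i-1)) = x 0"
  by (simp add: Linv_eq)

lemma Linv_right: "i \<in> {1..N} \<Longrightarrow> fif_Linv x N i (x i) = x N"
proof -
  assume i: "i \<in> {1..N}"
  have h: "x i - x (i-1) > 0" using xlt[of "i-1" i] i by auto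
  then show ?thesis using i by (simp add: Linv_eq)
qed

lemma Linv_maps: "i \<in> {1..N} \<Longrightarrow> t \<in> {x (i-1)..x i} \<Longrightarrow> fif_Linv x N i t \<in> {x 0..x N}"
proof -
  assume i: "i \<in> {1..N}" and t: "t \<in> {x (i-1)..x i}"
  have h: "x i - x (i-1) > 0" using xlt[of "i-1" i] i by auto
  have D: "x N - x 0 > 0" using x0N by simp
  have "(t - x (i-1)) * (x N - x 0) / (x i - x (i-1)) \<ge> 0" using t h D by simp
  moreover have "(t - x (i-1)) * (x N - x 0) / (x i - x (i-1)) \<le> x N - x 0"
    using t h D by (simp add: divide_le_eq mult_right_mono mult.commute)
  ultimately show ?thesis using i by (simp add: Linv_eq)
qed

lemma Linv_cont: "i \<in> {1..N} \<Longrightarrow> continuous_on S (fif_Linv x N i)"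
  unfolding fif_Linv_def using apos[of i] by (intro continuous_intros) auto

lemma I_sub: "i \<in> {1..N} \<Longrightarrow> fif_I x N i \<subseteq> {x (i-1)..x i}"
  unfolding fif_I_def by auto

lemma I_uniq: "i \<in> {1..N} \<Longrightarrow> j \<in> {1..N} \<Longrightarrow> t \<in> fif_I x N i \<Longrightarrow> t \<in> fif_I x N j \<Longrightarrow> i = j"
proof (rule ccontr)
  assume i: "i \<in> {1..N}" and j: "j \<in> {1..N}" and ti: "t \<in> fif_I x N i" and tj: "t \<in> fif_I x N j" and ne: "i \<noteq> j"
  have key: "False" if "a < b" "a \<in> {1..N}" "b \<in> {1..N}" "t \<in> fif_I x N a" "t \<in> fif_I x N b" for a b
  proof -
    have "a < N" using that by auto
    then have "t < x a" using that(4) unfolding fif_I_def by auto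
    moreover have "x a \<le> x (b-1)" using that by (intro xle) auto
    moreover have "x (b - 1) \<le> t" using that(3,5) unfolding fif_I_def by (auto split: if_splits)
    ultimately show False by simp
  qed
  show False using ne key[OF _ i j ti tj] key[OF _ j i tj ti] by linarith
qed

lemma I_exists: "t \<in> {x 0..x N} \<Longrightarrow> \<exists>i\<in>{1..N}. t \<in> fif_I x N i"
proof -
  assume t: "t \<in> {x 0..x N}"
  have gen: "\<forall>k. 1 \<le> k \<longrightarrow> k \<le> N \<longrightarrow> t \<in> {x 0..<x k} \<longrightarrow> (\<exists>i\<in>{1..k}. t \<in> {x (i-1)..<x i})"
  proof
    fix k show "1 \<le> k \<longrightarrow> k \<le> N \<longrightarrow> t \<in> {x 0..<x k} \<longrightarrow> (\<exists>i\<in>{1..k}. t \<in> {x (i-1)..<x i})"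
    proof (induction k)
      case 0 then show ?case by simp
    next
      case (Suc k)
      show ?case
      proof (intro impI)
        assume a: "1 \<le> Suc k" "Suc k \<le> N" "t \<in> {x 0..<x (Suc k)}"
        show "\<exists>i\<in>{1..Suc k}. t \<in> {x (i-1)..<x i}"
        proof (cases "k \<ge> 1 \<and> t < x k")
          case True
          then obtain i where "i\<in>{1..k}" "t \<in> {x (i-1)..<x i}" using Suc.IH a by auto
          then show ?thesis by (intro bexI[of _ i]) auto
        next
          case False
          then have "x k \<le> t" using a by (cases "k = 0") auto
          then show ?thesis using a by (intro bexI[of _ "Suc k"]) auto
        qed
      qed
    qed
  qed
  show ?thesis
  proof (cases "t < x (N-1)")
    case True
    have "N - 1 \<ge> 1" "N - 1 \<le> N" using N2 by auto
    then obtain i where i: "i\<in>{1..N-1}" "t \<in> {x (i-1)..<x i}" using gen True t by fastforce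
    then have "i < N" using N2 by auto
    then show ?thesis using i unfolding fif_I_def by (intro bexI[of _ i]) auto
  next
    case False
    then show ?thesis using t N2 unfolding fif_I_def by (intro bexI[of _ N]) auto
  qed
qed

lemma Top_eq: "i \<in> {1..N} \<Longrightarrow> t \<in> fif_I x N i \<Longrightarrow>
   Top N x \<alpha> q g t = \<alpha> i * g (fif_Linv x N i t) + q i (fif_Linv x N i t)"
proof -
  assume i: "i \<in> {1..N}" and t: "t \<in> fif_I x N i"
  have "(SOME i. i \<in> {1..N} \<and> t \<in> fif_I x N i) = i"
  proof (rule some_equality)
    show "i \<in> {1..N} \<and> t \<in> fif_I x N i" using i t by simp
    show "\<And>j. j \<in> {1..N} \<and> t \<in> fif_I x N j \<Longrightarrow> j = i" using I_uniq i t by blast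
  qed
  then show ?thesis unfolding Top_def Let_def by simp
qed

end

locale fif2 = fifl +
  fixes \<alpha> :: "nat \<Rightarrow> real" and q :: "nat \<Rightarrow> real \<Rightarrow> real" and y0 yN :: real
  assumes alpha: "\<And>i. i \<in> {1..N} \<Longrightarrow> \<bar>\<alpha> i\<bar> < 1"
    and qcont: "\<And>i. i \<in> {1..N} \<Longrightarrow> continuous_on {x 0..x N} (q i)"
    and q1: "q 1 (x 0) = y0 * (1 - \<alpha> 1)"
    and qN: "q N (x N) = yN * (1 - \<alpha> N)"
    and qmid: "\<And>i. i \<in> {1..N-1} \<Longrightarrow>
                \<alpha> (i + 1) * y0 + q (i + 1) (x 0) = \<alpha> i * yN + q i (x N)"
begin

lemma Top_piece:
  assumes g: "g (x N) = yN" "g (x 0) = y0" and i: "i \<in> {1..N}" and t: "t \<in> {x (i-1)..x i}"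
  shows "Top N x \<alpha> q g t = \<alpha> i * g (fif_Linv x N i t) + q i (fif_Linv x N i t)"
proof (cases "t < x i \<or> i = N")
  case True
  then have "t \<in> fif_I x N i" using t i unfolding fif_I_def by auto
  then show ?thesis using Top_eq i by blast
next
  case False
  then have ti: "t = x i" and iN: "i < N" using t i by auto
  have i1: "i + 1 \<in> {1..N}" using iN by auto
  have "t \<in> fif_I x N (i+1)" using ti iN xlt[of i "i+1"] unfolding fif_I_def by (cases "Suc i = N") auto
  then have "Top N x \<alpha> q g t = \<alpha> (i+1) * g (fif_Linv x N (i+1) t) + q (i+1) (fif_Linv x N (i+1) t)"
    using Top_eq i1 by blast
  also have "fif_Linv x N (i+1) t = x 0" using Linv_left[OF i1] ti by simp
  also have "\<alpha> (i+1) * g (x 0) + q (i+1) (x 0) = \<alpha> i * yN + q i (x N)"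
    using qmid[of i] iN i g by auto
  also have "x N = fif_Linv x N i t" using Linv_right[OF i] ti by simp
  finally show ?thesis using g ti i Linv_right[OF i] by simp
qed

lemma Top_cont:
  assumes gc: "continuous_on {x 0..x N} g" and g: "g (x N) = yN" "g (x 0) = y0"
  shows "continuous_on {x 0..x N} (Top N x \<alpha> q g)"
    "Top N x \<alpha> q g (x 0) = y0" "Top N x \<alpha> q g (x N) = yN"
proof -
  have piece: "continuous_on {x (i-1)..x i} (Top N x \<alpha> q g)" if i: "i \<in> {1..N}" for i
  proof -
    have "continuous_on {x (i-1)..x i} (\<lambda>t. \<alpha> i * g (fif_Linv x N i t) + q i (fif_Linv x N i t))"
    proof (intro continuous_intros)
      show "continuous_on {x (i-1)..x i} (\<lambda>t. g (fif_Linv x N i t))"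
        by (rule continuous_on_compose2[OF gc Linv_cont[OF i]]) (use Linv_maps[OF i] in auto)
      show "continuous_on {x (i-1)..x i} (\<lambda>t. q i (fif_Linv x N i t))"
        by (rule continuous_on_compose2[OF qcont[OF i] Linv_cont[OF i]]) (use Linv_maps[OF i] in auto)
    qed
    then show ?thesis
      by (rule continuous_on_eq) (use Top_piece[OF g i] in auto)
  qed
  have "\<forall>k. 1 \<le> k \<longrightarrow> k \<le> N \<longrightarrow> continuous_on {x 0..x k} (Top N x \<alpha> q g)"
  proof
    fix k show "1 \<le> k \<longrightarrow> k \<le> N \<longrightarrow> continuous_on {x 0..x k} (Top N x \<alpha> q g)"
    proof (induction k)
      case 0 then show ?case by simp
    next
      case (Suc k)
      show ?case
      proof (intro impI)
        assume a: "1 \<le> Suc k" "Suc k \<le> N"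
        show "continuous_on {x 0..x (Suc k)} (Top N x \<alpha> q g)"
        proof (cases "k = 0")
          case True then show ?thesis using piece[of 1] a by simp
        next
          case False
          then have c1: "continuous_on {x 0..x k} (Top N x \<alpha> q g)" using Suc.IH a by auto
          have c2: "continuous_on {x k..x (Suc k)} (Top N x \<alpha> q g)" using piece[of "Suc k"] a by simp
          have "{x 0..x (Suc k)} = {x 0..x k} \<union> {x k..x (Suc k)}"
            using xle[of 0 k] xle[of k "Suc k"] a by auto
          then show ?thesis using continuous_on_closed_Un[OF _ _ c1 c2] by simp
        qed
      qed
    qed
  qed
  then show "continuous_on {x 0..x N} (Top N x \<alpha> q g)" using N2 by auto
  have one: "1 \<in> {1..N}" using N2 by auto
  have "Top N x \<alpha> q g (x 0) = \<alpha> 1 * g (x 0) + q 1 (x 0)"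
    using Top_piece[OF g one, of "x 0"] Linv_left[OF one] xle[of 0 1] N2 by auto
  then show "Top N x \<alpha> q g (x 0) = y0" using g q1 by (simp add: algebra_simps)
  have nn: "N \<in> {1..N}" using N2 by auto
  have "Top N x \<alpha> q g (x N) = \<alpha> N * g (x N) + q N (x N)"
    using Top_piece[OF g nn, of "x N"] Linv_right[OF nn] xle[of "N-1" N] N2 by auto
  then show "Top N x \<alpha> q g (x N) = yN" using g qN by (simp add: algebra_simps)
qed

end


locale fif3 = fif2 +
  fixes f :: "real \<Rightarrow> real"
  assumes fbdd: "bounded (f ` {x 0..x N})"
    and feq: "\<And>i t. i \<in> {1..N} \<Longrightarrow> t \<in> fif_I x N i \<Longrightarrow>
                f t = \<alpha> i * f (fif_Linv x N i t) + q i (fif_Linv x N i t)"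
begin

definition lam where "lam = Max ((\<lambda>i. \<bar>\<alpha> i\<bar>) ` {1..N})"

lemma lam_ge: "i \<in> {1..N} \<Longrightarrow> \<bar>\<alpha> i\<bar> \<le> lam"
  unfolding lam_def by (intro Max_ge) auto

lemma lam_lt: "lam < 1" "0 \<le> lam"
proof -
  have "lam \<in> (\<lambda>i. \<bar>\<alpha> i\<bar>) ` {1..N}" unfolding lam_def using N2 by (intro Max_in) auto
  then show "lam < 1" using alpha by auto
  have "1 \<in> {1..N}" using N2 by auto
  then show "0 \<le> lam" using lam_ge[of 1] abs_ge_zero[of "\<alpha> 1"] by linarith
qed

lemma Top_bound:
  assumes b: "\<forall>t\<in>{x 0..x N}. \<bar>f t - g t\<bar> \<le> M"
  shows "\<forall>t\<in>{x 0..x N}. \<bar>f t - Top N x \<alpha> q g t\<bar> \<le> lam * M"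
proof
  fix t assume t: "t \<in> {x 0..x N}"
  then obtain i where i: "i \<in> {1..N}" and ti: "t \<in> fif_I x N i" using I_exists by blast
  define L where "L = fif_Linv x N i t"
  have L: "L \<in> {x 0..x N}" unfolding L_def using Linv_maps[OF i] I_sub[OF i] ti by auto
  have "f t - Top N x \<alpha> q g t = \<alpha> i * (f L - g L)"
    using feq[OF i ti] Top_eq[OF i ti] unfolding L_def by (simp add: algebra_simps)
  then have "\<bar>f t - Top N x \<alpha> q g t\<bar> = \<bar>\<alpha> i\<bar> * \<bar>f L - g L\<bar>" by (simp add: abs_mult)
  also have "\<dots> \<le> lam * M"
    using b L lam_ge[OF i] by (intro mult_mono) auto
  finally show "\<bar>f t - Top N x \<alpha> q g t\<bar> \<le> lam * M" .
qed

lemma f_cont: "continuous_on {x 0..x N} f"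
proof -
  define g0 where "g0 = (\<lambda>t. y0 + (yN - y0) * (t - x 0) / (x N - x 0))"
  have g0c: "continuous_on {x 0..x N} g0" unfolding g0_def using x0N by (intro continuous_intros) auto
  have g0e: "g0 (x 0) = y0" "g0 (x N) = yN" unfolding g0_def using x0N by auto
  obtain B where B: "\<forall>t\<in>{x 0..x N}. \<bar>f t\<bar> \<le> B" using fbdd unfolding bounded_iff by auto
  have "bounded (g0 ` {x 0..x N})"
    by (intro compact_imp_bounded compact_continuous_image g0c) auto
  then obtain B2 where B2: "\<forall>t\<in>{x 0..x N}. \<bar>g0 t\<bar> \<le> B2" unfolding bounded_iff by auto
  define M where "M = B + B2"
  have M: "\<forall>t\<in>{x 0..x N}. \<bar>f t - g0 t\<bar> \<le> M" unfolding M_def using B B2 by force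
  define G where "G n = ((Top N x \<alpha> q) ^^ n) g0" for n
  have P: "continuous_on {x 0..x N} (G n) \<and> G n (x 0) = y0 \<and> G n (x N) = yN \<and>
     (\<forall>t\<in>{x 0..x N}. \<bar>f t - G n t\<bar> \<le> lam ^ n * M)" for n
  proof (induction n)
    case 0 then show ?case using g0c g0e M unfolding G_def by simp
  next
    case (Suc n)
    have GS: "G (Suc n) = Top N x \<alpha> q (G n)" unfolding G_def by simp
    show ?case unfolding GS using Top_cont[of "G n"] Top_bound[of "G n" "lam ^ n * M"] Suc.IH
      by (simp add: mult.assoc)
  qed
  have lim: "(\<lambda>n. lam ^ n * M) \<longlonglongrightarrow> 0"
    using lam_lt by (intro tendsto_mult_left_zero LIMSEQ_power_zero) auto
  have "uniform_limit {x 0..x N} G f sequentially"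
  proof (rule uniform_limitI)
    fix e :: real assume e: "e > 0"
    have "\<forall>\<^sub>F n in sequentially. lam ^ n * M < e" using order_tendstoD(2)[OF lim e] .
    then show "\<forall>\<^sub>F n in sequentially. \<forall>t\<in>{x 0..x N}. dist (G n t) (f t) < e"
    proof (rule eventually_mono)
      fix n assume "lam ^ n * M < e"
      then show "\<forall>t\<in>{x 0..x N}. dist (G n t) (f t) < e"
        using P[of n] by (force simp: dist_real_def abs_minus_commute)
    qed
  qed
  then show ?thesis
    by (rule uniform_limit_theorem[rotated]) (use P in auto)
qed

end


context fif3 begin

lemma tel: "(\<Sum>i=1..n. x i - x (i - 1)) = x n - x 0"
  by (induction n) auto

lemma int_split: "k \<le> N \<Longrightarrow> integral {x 0..x k} f = (\<Sum>i=1..k. integral {x (i-1)..x i} f)"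
proof (induction k)
  case 0 then show ?case by simp
next
  case (Suc k)
  have "integral {x 0..x k} f + integral {x k..x (Suc k)} f = integral {x 0..x (Suc k)} f"
  proof -
    have le1: "x 0 \<le> x k" "x k \<le> x (Suc k)" "x (Suc k) \<le> x N"
      using Suc.prems xle[of 0 k] xle[of k "Suc k"] xle[of "Suc k" N] by auto
    show ?thesis
      by (rule Henstock_Kurzweil_Integration.integral_combine[OF le1(1) le1(2)], rule integrable_continuous_real,
          rule continuous_on_subset[OF f_cont]) (use le1 in auto)
  qed
  then show ?case using Suc by simp
qed

lemma Linv_le_iff: "i \<in> {1..N} \<Longrightarrow> fif_Linv x N i s \<le> fif_Linv x N i t \<longleftrightarrow> s \<le> t"
proof -
  assume i: "i \<in> {1..N}"
  have h: "x i - x (i-1) > 0" using xlt[of "i-1" i] i by auto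
  have D: "x N - x 0 > 0" using x0N by simp
  have "(s - x (i-1)) * (x N - x 0) / (x i - x (i-1)) \<le> (t - x (i-1)) * (x N - x 0) / (x i - x (i-1))
        \<longleftrightarrow> s \<le> t"
    using h D by (simp add: divide_le_cancel mult_le_cancel_right)
  then show ?thesis using i by (simp add: Linv_eq)
qed

lemma Linv_less_iff: "i \<in> {1..N} \<Longrightarrow> fif_Linv x N i s < fif_Linv x N i t \<longleftrightarrow> s < t"
  using Linv_le_iff by (meson not_le)

lemma int_piece:
  assumes i: "i \<in> {1..N}"
  shows "integral {x (i-1)..x i} f = fif_a x N i * (\<alpha> i * integral {x 0..x N} f + integral {x 0..x N} (q i))"
proof -
  define a where "a = fif_a x N i"
  define b where "b = fif_b x N i"
  define J where "J = integral {x (i-1)..x i} f"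
  have a: "a > 0" unfolding a_def using apos[OF i] .
  have sub: "{x (i-1)..x i} \<subseteq> {x 0..x N}" using xle[of 0 "i-1"] xle[of i N] i by auto
  have "(f has_integral J) (cbox (x (i-1)) (x i))" unfolding J_def cbox_interval
    by (intro integrable_integral integrable_continuous_real continuous_on_subset[OF f_cont sub])
  from has_integral_affinity'[OF this a, of b]
  have "((\<lambda>u. f (a * u + b)) has_integral J / a) {(x (i-1) - b) / a .. (x i - b) / a}"
    by (simp add: cbox_interval divide_inverse_commute)
  moreover have "(x (i-1) - b) / a = x 0" "(x i - b) / a = x N"
    using Linv_left[OF i] Linv_right[OF i] unfolding fif_Linv_def a_def b_def by auto
  ultimately have h1: "((\<lambda>u. f (a * u + b)) has_integral J / a) {x 0..x N}" by simp
  have Lv: "fif_Linv x N i (a * u + b) = u" for u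
    unfolding fif_Linv_def a_def b_def using a a_def by simp
  have eqs: "f (a * u + b) = \<alpha> i * f u + q i u" if u: "u \<in> {x 0..x N} - {x N}" for u
  proof -
    have "fif_Linv x N i (x (i-1)) \<le> fif_Linv x N i (a * u + b)"
      "fif_Linv x N i (a * u + b) < fif_Linv x N i (x i)"
      using u Linv_left[OF i] Linv_right[OF i] Lv[of u] by auto
    then have "a * u + b \<in> {x (i-1)..<x i}" using Linv_le_iff[OF i] Linv_less_iff[OF i] by auto
    then have "a * u + b \<in> fif_I x N i" using i unfolding fif_I_def by (cases "i < N") auto
    from feq[OF i this] show ?thesis using Lv[of u] by simp
  qed
  have h2: "((\<lambda>u. \<alpha> i * f u + q i u) has_integral J / a) {x 0..x N}"
    by (rule has_integral_spike[OF negligible_sing[of "x N"] _ h1]) (simp add: eqs)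
  have h3: "((\<lambda>u. \<alpha> i * f u + q i u) has_integral
        (\<alpha> i * integral {x 0..x N} f + integral {x 0..x N} (q i))) {x 0..x N}"
    by (intro has_integral_add has_integral_mult_right integrable_integral
        integrable_continuous_real f_cont qcont[OF i])
  have "J / a = \<alpha> i * integral {x 0..x N} f + integral {x 0..x N} (q i)"
    using has_integral_unique[OF h2 h3] .
  then show ?thesis unfolding J_def a_def[symmetric] using a by (simp add: field_simps)
qed

end



theorem mainTheorem9:
  fixes N :: nat and x :: "nat \<Rightarrow> real" and fh :: "nat \<Rightarrow> real"
    and \<alpha> :: "nat \<Rightarrow> real" and q :: "nat \<Rightarrow> real \<Rightarrow> real"
    and f :: "real \<Rightarrow> real" and y0 yN :: real
  assumes N2: "N \<ge> 2"
    and xinc: "\<And>i. i < N \<Longrightarrow> x i < x (Suc i)"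
    and alpha: "\<And>i. i \<in> {1..N} \<Longrightarrow> \<bar>\<alpha> i\<bar> < 1"
    and qlip: "\<And>i. i \<in> {1..N} \<Longrightarrow> \<exists>C. C-lipschitz_on {x 0..x N} (q i)"
    and fbdd: "bounded (f ` {x 0..x N})"
    and feq: "\<And>i t. i \<in> {1..N} \<Longrightarrow> t \<in> fif_I x N i \<Longrightarrow>
                f t = \<alpha> i * f (fif_Linv x N i t) + q i (fif_Linv x N i t)"
    and qint: "\<And>i. i \<in> {1..N} \<Longrightarrow>
                integral {x 0..x N} (q i) =
                  ((x i - x (i - 1)) * fh i
                   - \<alpha> i * fif_a x N i * (\<Sum>j=1..N. (x j - x (j - 1)) * fh j)) / fif_a x N i"
    and q1: "q 1 (x 0) = y0 * (1 - \<alpha> 1)"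
    and qN: "q N (x N) = yN * (1 - \<alpha> N)"
    and qmid: "\<And>i. i \<in> {1..N-1} \<Longrightarrow>
                \<alpha> (i + 1) * y0 + q (i + 1) (x 0) = \<alpha> i * yN + q i (x N)"
  shows "continuous_on {x 0..x N} f \<and>
         (\<forall>i\<in>{1..N}. (f has_integral (x i - x (i - 1)) * fh i) {x (i - 1)..x i})"
  proof -
  have qcont: "\<And>i. i \<in> {1..N} \<Longrightarrow> continuous_on {x 0..x N} (q i)"
    using qlip lipschitz_on_continuous_on by blast
  interpret fif3 N x \<alpha> q y0 yN f
    by unfold_locales (use N2 xinc alpha qcont q1 qN qmid fbdd feq in auto)
  define S where "S = integral {x 0..x N} f"
  define H where "H = (\<Sum>j=1..N. (x j - x (j - 1)) * fh j)"
  define A where "A = (\<Sum>i=1..N. fif_a x N i * \<alpha> i)"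
  have J: "integral {x (i-1)..x i} f = fif_a x N i * \<alpha> i * S + (x i - x (i - 1)) * fh i
             - fif_a x N i * \<alpha> i * H" if i: "i \<in> {1..N}" for i
  proof -
    have a: "fif_a x N i > 0" using apos[OF i] .
    have e2: "fif_a x N i * integral {x 0..x N} (q i) = (x i - x (i - 1)) * fh i - \<alpha> i * fif_a x N i * H"
      using qint[OF i] a unfolding H_def by simp
    show ?thesis using int_piece[OF i] e2 unfolding S_def[symmetric]
      by (simp add: distrib_left mult.assoc mult.left_commute)
  qed
  have "S = (\<Sum>i=1..N. integral {x (i-1)..x i} f)" unfolding S_def using int_split[of N] by simp
  also have "\<dots> = (\<Sum>i=1..N. fif_a x N i * \<alpha> i * S + (x i - x (i - 1)) * fh i
             - fif_a x N i * \<alpha> i * H)" using J by (intro sum.cong) auto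
  also have "\<dots> = A * S + H - A * H"
    unfolding A_def H_def by (simp add: sum.distrib sum_subtractf sum_distrib_right)
  finally have eq: "(S - H) * (1 - A) = 0" by (simp add: algebra_simps)
  have "A < (\<Sum>i=1..N. fif_a x N i)" unfolding A_def
  proof (rule sum_strict_mono)
    show "finite {1..N}" by simp
    show "{1..N} \<noteq> {}" using N2 by simp
    fix i assume i: "i \<in> {1..N}"
    have "\<alpha> i < 1" using alpha[OF i] by linarith
    then show "fif_a x N i * \<alpha> i < fif_a x N i" using apos[OF i] by simp
  qed
  also have "(\<Sum>i=1..N. fif_a x N i) = (\<Sum>i=1..N. x i - x (i - 1)) / (x N - x 0)"
    unfolding fif_a_def by (simp add: sum_divide_distrib)
  also have "\<dots> = 1" using tel[of N] x0N by simp
  finally have "A < 1" .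
  then have SH: "S = H" using eq by simp
  show ?thesis
  proof
    show "continuous_on {x 0..x N} f" using f_cont .
    show "\<forall>i\<in>{1..N}. (f has_integral (x i - x (i - 1)) * fh i) {x (i - 1)..x i}"
    proof
      fix i assume i: "i \<in> {1..N}"
      have sub: "{x (i-1)..x i} \<subseteq> {x 0..x N}" using xle[of 0 "i-1"] xle[of i N] i by auto
      have "(f has_integral integral {x (i-1)..x i} f) {x (i-1)..x i}"
        by (intro integrable_integral integrable_continuous_real continuous_on_subset[OF f_cont sub])
      then show "(f has_integral (x i - x (i - 1)) * fh i) {x (i - 1)..x i}"
        using J[OF i] SH by simp
    qed
  qed
qed

end
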